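(* For every $\varepsilon>0$ there exists $n_0\in\mathbb{N}$ such that $\int_{Q_n}\tau\,d\mu_n\ge 2(1-\varepsilon)n$ for all $n\ge n_0$.
   Context: $\mathbb{F}_2((x^{-1}))$ is the field of formal series $r=\sum_{z\in\mathbb{Z}}a_zx^z$, $a_z\in\mathbb{F}_2$, with $a_z\neq0$ for only finitely many positive $z$ (usual addition and Cauchy multiplication); $\mathbb{F}_2[x]$ is a subring. $\deg(r)=\max\{z: a_z\ne 0\}$. The polynomial part is $[r]=\sum_{z\ge0}a_zx^z\in\mathbb{F}_2[x]$. Define $S(r)=\frac{r}{x+1}$ if $[r](1)=0$ and $S(r)=\frac{xr}{x+1}$ if $[r](1)=1$. For $r$ with $\deg(r)\ge0$, $\tau(r)$ is the least $k\in\mathbb{N}$ with $[S^k(r)]=1$ (this is finite). For $n\in\mathbb{N}$, $Q_n=\{r:\deg(r)=n\}$ and $\mu_n$ is the probability measure on $Q_n$ under which the coefficients $a_{n-1},a_{n-2},\dots$ of $r$ are independent and uniform in $\mathbb{F}_2$. *)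

theory Defs
  imports "HOL-Probability.Probability" "HOL-Library.Z2"
    "HOL-Computational_Algebra.Formal_Laurent_Series"
    "HOL-Computational_Algebra.Polynomial"
begin

text \<open>The field F_2((x^{-1})) is represented as bit fls, i.e. formal Laurent series
  (finitely many negative powers) in the variable y = x^{-1} over F_2 = bit.
  The coefficient a_z of x^z is the coefficient of y^{-z}.\<close>

definition xx :: "bit fls" where
  "xx = fls_X_inv"

definition coeffx :: "bit fls \<Rightarrow> int \<Rightarrow> bit" where
  "coeffx r z = fls_nth r (- z)"

definition degx :: "bit fls \<Rightarrow> int" where
  "degx r = - fls_subdegree r"

definition polypart :: "bit fls \<Rightarrow> bit poly" where
  "polypart r = Poly (map (\<lambda>i. coeffx r (int i)) [0..<nat (degx r) + 1])"

definition S :: "bit fls \<Rightarrow> bit fls" where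
  "S r = (if poly (polypart r) 1 = 0 then r / (xx + 1) else (xx * r) / (xx + 1))"

definition tau :: "bit fls \<Rightarrow> nat" where
  "tau r = (LEAST k. polypart ((S ^^ k) r) = 1)"

definition Q :: "nat \<Rightarrow> bit fls set" where
  "Q n = {r. r \<noteq> 0 \<and> degx r = int n}"

text \<open>Uniform distribution on F_2, and the element of Q_n with leading coefficient
  a_n = 1 and a_{n-1-i} = c i.\<close>
definition coin :: "bit measure" where
  "coin = measure_pmf (pmf_of_set (UNIV :: bit set))"

definition r_of :: "nat \<Rightarrow> (nat \<Rightarrow> bit) \<Rightarrow> bit fls" where
  "r_of n c = Abs_fls (\<lambda>m. if m < - int n then 0
                            else if m = - int n then 1
                            else c (nat (m + int n) - 1))"

definition mu :: "nat \<Rightarrow> bit fls measure" where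
  "mu n = embed_measure (PiM (UNIV :: nat set) (\<lambda>_. coin)) (r_of n)"

end

theory Submission
  imports Defs "HOL-Computational_Algebra.Polynomial_Factorial"
begin

lemma coeffx_zero[simp]: "coeffx 0 z = 0" by (simp add: coeffx_def)
lemma coeffx_add[simp]: "coeffx (a + b) z = coeffx a z + coeffx b z" by (simp add: coeffx_def)
lemma coeffx_diff[simp]: "coeffx (a - b) z = coeffx a z - coeffx b z" by (simp add: coeffx_def)
lemma coeffx_one: "coeffx 1 z = (if z = 0 then 1 else 0)" by (simp add: coeffx_def)
lemma coeffx_xx_mult: "coeffx (xx * f) z = coeffx f (z - 1)"
  by (simp add: coeffx_def xx_def fls_X_inv_times_conv_shift)

lemma coeffx_above_deg: "degx r < z \<Longrightarrow> coeffx r z = 0"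
  by (simp add: coeffx_def degx_def)

lemma coeffx_deg: "r \<noteq> 0 \<Longrightarrow> coeffx r (degx r) \<noteq> 0"
  by (simp add: coeffx_def degx_def)

lemma coeffx_deg_bit: "r \<noteq> 0 \<Longrightarrow> coeffx r (degx r) = 1"
  using coeffx_deg[of r] by (cases "coeffx r (degx r)") auto

lemma degx_geI: "coeffx r z \<noteq> 0 \<Longrightarrow> z \<le> degx r"
  unfolding coeffx_def degx_def using fls_subdegree_leI[of r "-z"] by simp

lemma vanish_iff: "(\<forall>z\<ge>a. coeffx g z = 0) \<longleftrightarrow> (g = 0 \<or> degx g < a)"
proof
  assume H: "\<forall>z\<ge>a. coeffx g z = 0"
  show "g = 0 \<or> degx g < a"
  proof (rule ccontr)
    assume "\<not> (g = 0 \<or> degx g < a)"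
    hence "g \<noteq> 0" "degx g \<ge> a" by auto
    with H coeffx_deg[of g] show False by auto
  qed
next
  assume "g = 0 \<or> degx g < a"
  thus "\<forall>z\<ge>a. coeffx g z = 0" using coeffx_above_deg by auto
qed

lemma degx_mult: "a \<noteq> 0 \<Longrightarrow> b \<noteq> 0 \<Longrightarrow> degx (a * b) = degx a + degx b"
  by (simp add: degx_def)

lemma xx_nz[simp]: "xx \<noteq> 0" by (simp add: xx_def)
lemma degx_xx[simp]: "degx xx = 1" by (simp add: degx_def xx_def)

lemma coeffx_xx: "coeffx xx z = (if z = 1 then 1 else 0)"
  by (simp add: coeffx_def xx_def)

lemma u_nz[simp]: "xx + 1 \<noteq> 0"
proof
  assume "xx + 1 = 0"
  hence "coeffx (xx + 1) 1 = 0" by simp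
  thus False by (simp add: coeffx_xx coeffx_one)
qed

lemma degx_u[simp]: "degx (xx + 1) = 1"
proof -
  have "coeffx (xx+1) 1 \<noteq> 0" by (simp add: coeffx_xx coeffx_one)
  hence "1 \<le> degx (xx+1)" by (rule degx_geI)
  moreover have "\<forall>z\<ge>2. coeffx (xx+1) z = 0" by (simp add: coeffx_xx coeffx_one)
  hence "degx (xx+1) < 2" using vanish_iff[of 2 "xx+1"] by simp
  ultimately show ?thesis by simp
qed

lemma div_u_vanish:
  assumes "g = 0 \<or> degx g < a"
  shows "g / (xx+1) = 0 \<or> degx (g / (xx+1)) < a - 1"
proof (cases "g = 0")
  case True then show ?thesis by simp
next
  case False
  define w where "w = g / (xx+1)"
  have gw: "g = (xx+1) * w" unfolding w_def by simp
  have "w \<noteq> 0" using False gw by auto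
  hence "degx g = 1 + degx w" using gw degx_mult[of "xx+1" w] by simp
  with assms False show ?thesis unfolding w_def[symmetric] by simp
qed

lemma coeff_polypart: "coeff (polypart r) i = coeffx r (int i)"
proof (cases "i < nat (degx r) + 1")
  case True
  thus ?thesis by (simp add: polypart_def nth_default_def del: upt_Suc)
next
  case False
  hence "coeffx r (int i) = 0" by (intro coeffx_above_deg) linarith
  with False show ?thesis by (simp add: polypart_def nth_default_def del: upt_Suc)
qed

lemma polypart_eqI: "(\<And>i. coeffx r (int i) = coeff p i) \<Longrightarrow> polypart r = p"
  by (rule poly_eqI) (simp add: coeff_polypart)

lemma polypart_add: "polypart (a + b) = polypart a + polypart b"
  by (rule poly_eqI) (simp add: coeff_polypart)

lemma polypart_zero_iff: "polypart g = 0 \<longleftrightarrow> (g = 0 \<or> degx g < 0)"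
proof -
  have "polypart g = 0 \<longleftrightarrow> (\<forall>i. coeffx g (int i) = 0)"
    by (metis coeff_polypart coeff_0 leading_coeff_0_iff)
  also have "\<dots> \<longleftrightarrow> (\<forall>z\<ge>0. coeffx g z = 0)"
    by (metis nonneg_int_cases of_nat_0_le_iff)
  finally show ?thesis using vanish_iff by simp
qed

lemma coeffx_eqI: "(\<And>z. coeffx a z = coeffx b z) \<Longrightarrow> a = b"
  unfolding coeffx_def by (rule fls_eqI) (metis minus_minus)

definition emb :: "bit poly \<Rightarrow> bit fls" where
  "emb p = Abs_fls (\<lambda>m. if m \<le> 0 then coeff p (nat (-m)) else 0)"

lemma coeffx_emb: "coeffx (emb p) z = (if 0 \<le> z then coeff p (nat z) else 0)"
proof -
  have "\<forall>\<^sub>\<infinity>n. (\<lambda>m. if m \<le> 0 then coeff p (nat (-m)) else 0) (- int n) = 0"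
    using MOST_coeff_eq_0[of p] by simp
  thus ?thesis unfolding emb_def coeffx_def by simp
qed

lemma emb_add: "emb (p + q) = emb p + emb q"
  by (rule coeffx_eqI) (simp add: coeffx_emb)

lemma emb_one: "emb 1 = 1"
  by (rule coeffx_eqI) (auto simp: coeffx_emb coeffx_one coeff_1 nat_eq_iff)

lemma emb_pCons0: "emb (pCons 0 p) = xx * emb p"
proof (rule coeffx_eqI)
  fix z :: int
  show "coeffx (emb (pCons 0 p)) z = coeffx (xx * emb p) z"
  proof (cases "z \<ge> 1")
    case True
    hence "nat z = Suc (nat (z - 1))" by linarith
    with True show ?thesis by (simp add: coeffx_xx_mult coeffx_emb)
  next
    case False
    then show ?thesis by (cases "z = 0") (auto simp: coeffx_xx_mult coeffx_emb)
  qed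
qed

definition uu :: "bit poly" where "uu = [:1,1:]"

lemma uu_nz: "uu \<noteq> 0" by (simp add: uu_def)

lemma uu_mult: "uu * q = q + pCons 0 q"
  by (simp add: uu_def)

lemma emb_uu_mult: "emb (uu * q) = (xx + 1) * emb q"
  by (simp add: uu_mult emb_add emb_pCons0 algebra_simps)

lemma emb_x_mult: "emb ([:0,1:] * p) = xx * emb p"
  by (simp add: emb_pCons0)

lemma polypart_emb: "polypart (emb p) = p"
  by (rule polypart_eqI) (simp add: coeffx_emb)

definition T :: "bit poly \<Rightarrow> bit poly" where
  "T p = (if poly p 1 = 0 then p div uu else ([:0,1:] * p + 1) div uu)"

lemma bit_neg_one: "- (1::bit) = 1" by simp

lemma uu_dvd_iff: "uu dvd p \<longleftrightarrow> poly p 1 = 0"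
  using poly_eq_0_iff_dvd[of p 1] by (simp add: uu_def)

lemma polypart_S: "polypart (S r) = T (polypart r)"
proof -
  define p where "p = polypart r"
  define f where "f = r - emb p"
  have rf: "r = emb p + f" unfolding f_def by simp
  have fv: "\<forall>z\<ge>0. coeffx f z = 0"
    by (auto simp: f_def p_def coeffx_emb coeff_polypart)
  show ?thesis
  proof (cases "poly p 1 = 0")
    case True
    then obtain q where pq: "p = uu * q" using uu_dvd_iff by blast
    have Tp: "T p = q" using True pq uu_nz by (simp add: T_def)
    have "S r = r / (xx + 1)" using True by (simp add: S_def p_def)
    also have "\<dots> = emb q + f / (xx+1)"
      unfolding rf pq emb_uu_mult by (simp add: add_divide_distrib)
    finally have Sr: "S r = emb q + f / (xx+1)" .
    have "f = 0 \<or> degx f < 0" using fv vanish_iff by blast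
    hence "f/(xx+1) = 0 \<or> degx (f/(xx+1)) < 0 - 1" by (rule div_u_vanish)
    hence "polypart (f/(xx+1)) = 0" using polypart_zero_iff by force
    thus ?thesis using Sr Tp by (simp add: polypart_add polypart_emb p_def)
  next
    case False
    have "poly ([:0,1:] * p + 1) 1 = 0" using False by (cases "poly p 1") auto
    then obtain q where pq: "[:0,1:] * p + 1 = uu * q" using uu_dvd_iff by blast
    have Tp: "T p = q" using False pq uu_nz by (simp add: T_def)
    have e: "xx * emb p = (xx + 1) * emb q - 1"
      using arg_cong[OF pq, of emb] unfolding emb_add emb_one emb_x_mult emb_uu_mult
      by (simp add: algebra_simps)
    have "S r = xx * r / (xx + 1)" using False by (simp add: S_def p_def)
    also have "xx * r = (xx + 1) * emb q + (xx * f - 1)"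
      unfolding rf by (simp add: algebra_simps e)
    also have "\<dots> / (xx + 1) = emb q + (xx * f - 1) / (xx + 1)"
      by (simp add: add_divide_distrib)
    finally have Sr: "S r = emb q + (xx * f - 1) / (xx + 1)" .
    have "\<forall>z\<ge>1. coeffx (xx * f - 1) z = 0"
      using fv by (auto simp: coeffx_xx_mult coeffx_one)
    hence "xx * f - 1 = 0 \<or> degx (xx * f - 1) < 1" using vanish_iff by blast
    hence "(xx * f - 1)/(xx+1) = 0 \<or> degx ((xx * f - 1)/(xx+1)) < 1 - 1"
      by (rule div_u_vanish)
    hence "polypart ((xx * f - 1)/(xx+1)) = 0" using polypart_zero_iff by force
    thus ?thesis using Sr Tp by (simp add: polypart_add polypart_emb p_def)
  qed
qed

lemma polypart_S_pow: "polypart ((S ^^ k) r) = (T ^^ k) (polypart r)"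
  by (induction k) (simp_all add: polypart_S)

definition tauP :: "bit poly \<Rightarrow> nat" where
  "tauP p = (LEAST k. (T ^^ k) p = 1)"

lemma tau_tauP: "tau r = tauP (polypart r)"
  by (simp add: tau_def tauP_def polypart_S_pow)

lemma coeffx_r_of: "coeffx (r_of n c) z =
   (if z > int n then 0 else if z = int n then 1 else c (nat (int n - z) - 1))"
proof -
  have "\<forall>\<^sub>\<infinity>k. (\<lambda>m. if m < - int n then 0 else if m = - int n then 1
                     else c (nat (m + int n) - 1)) (- int k) = 0"
    by (rule MOST_nat[THEN iffD2]) (rule exI[of _ n], auto)
  thus ?thesis unfolding r_of_def coeffx_def by (auto simp: algebra_simps)
qed

definition Pp :: "nat \<Rightarrow> (nat \<Rightarrow> bit) \<Rightarrow> bit poly" where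
  "Pp n c = polypart (r_of n c)"

lemma coeff_Pp: "coeff (Pp n c) i = (if i > n then 0 else if i = n then 1 else c (n - 1 - i))"
proof -
  have "coeff (Pp n c) i = coeffx (r_of n c) (int i)" by (simp add: Pp_def coeff_polypart)
  also have "\<dots> = (if i > n then 0 else if i = n then 1 else c (n - 1 - i))"
    unfolding coeffx_r_of by (auto simp: nat_diff_distrib)
  finally show ?thesis .
qed

lemma Pp_nz: "Pp n c \<noteq> 0"
  using coeff_Pp[of n c n] by auto

lemma degree_Pp: "degree (Pp n c) = n"
proof (rule antisym)
  show "degree (Pp n c) \<le> n" by (rule degree_le) (simp add: coeff_Pp)
  show "n \<le> degree (Pp n c)" by (rule le_degree) (simp add: coeff_Pp)
qed

lemma Pp_cong: "(\<And>i. i < n \<Longrightarrow> c i = c' i) \<Longrightarrow> Pp n c = Pp n c'"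
  by (rule poly_eqI) (simp add: coeff_Pp)

lemma r_of_nz: "r_of n c \<noteq> 0"
  using coeffx_r_of[of n c n] by auto

lemma degx_r_of: "degx (r_of n c) = int n"
proof -
  have "int n \<le> degx (r_of n c)" by (rule degx_geI) (simp add: coeffx_r_of)
  moreover have "\<forall>z\<ge>int n + 1. coeffx (r_of n c) z = 0" by (simp add: coeffx_r_of)
  hence "degx (r_of n c) < int n + 1" using vanish_iff r_of_nz by blast
  ultimately show ?thesis by simp
qed

lemma inj_r_of: "inj (r_of n)"
proof (rule injI)
  fix c c' assume eq: "r_of n c = r_of n c'"
  show "c = c'"
  proof
    fix i
    have "coeffx (r_of n c) (int n - 1 - int i) = coeffx (r_of n c') (int n - 1 - int i)"
      using eq by simp
    moreover have "nat (int n - (int n - 1 - int i)) - 1 = i" by simp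
    ultimately show "c i = c' i" unfolding coeffx_r_of by (simp split: if_splits)
  qed
qed

lemma degx_one[simp]: "degx 1 = 0" by (simp add: degx_def)

lemma degx_xx_pow: "degx (xx ^ j) = int j"
  by (induction j) (simp_all add: degx_mult)

lemma degx_u_pow: "degx ((xx+1) ^ j) = int j"
  by (induction j) (simp_all add: degx_mult)

lemma S_pow_form: "\<exists>j\<le>k. (S ^^ k) r = xx ^ j * r / (xx+1) ^ k"
proof (induction k)
  case 0 then show ?case by simp
next
  case (Suc k)
  then obtain j where j: "j \<le> k" "(S ^^ k) r = xx ^ j * r / (xx+1) ^ k" by blast
  show ?case
  proof (cases "poly (polypart ((S ^^ k) r)) 1 = 0")
    case True
    hence "(S ^^ Suc k) r = xx ^ j * r / (xx+1) ^ Suc k" using j by (simp add: S_def ac_simps)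
    thus ?thesis using j by (intro exI[of _ j]) auto
  next
    case False
    hence "(S ^^ Suc k) r = xx ^ Suc j * r / (xx+1) ^ Suc k" using j by (simp add: S_def ac_simps)
    thus ?thesis using j by (intro exI[of _ "Suc j"]) auto
  qed
qed

lemma degx_polypart: "polypart s \<noteq> 0 \<Longrightarrow> degx s = int (degree (polypart s))"
proof -
  assume H: "polypart s \<noteq> 0"
  hence s: "s \<noteq> 0" "degx s \<ge> 0" using polypart_zero_iff by auto
  have "degree (polypart s) = nat (degx s)"
  proof (rule antisym)
    show "degree (polypart s) \<le> nat (degx s)"
      by (rule degree_le) (auto simp: coeff_polypart intro!: coeffx_above_deg)
    show "nat (degx s) \<le> degree (polypart s)"
      by (rule le_degree) (use s in \<open>simp add: coeff_polypart coeffx_deg\<close>)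
  qed
  thus ?thesis using s by simp
qed

lemma density_fls:
  assumes eq: "polypart ((S ^^ n) (r_of n c)) = polypart ((S ^^ n) (r_of n c'))"
    and nz: "polypart ((S ^^ n) (r_of n c)) \<noteq> 0"
    and i: "i < degree (polypart ((S ^^ n) (r_of n c)))"
  shows "c i = c' i"
proof -
  define r where "r = r_of n c"
  define r' where "r' = r_of n c'"
  define m where "m = degree (polypart ((S ^^ n) r))"
  obtain j where j: "(S ^^ n) r = xx ^ j * r / (xx+1) ^ n" and jn: "j \<le> n"
    using S_pow_form by blast
  obtain j' where j': "(S ^^ n) r' = xx ^ j' * r' / (xx+1) ^ n" using S_pow_form by blast
  have unz: "(xx+1)^n \<noteq> 0" by simp
  have rnz: "r \<noteq> 0" "r' \<noteq> 0" by (simp_all add: r_def r'_def r_of_nz)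
  have nz': "polypart ((S ^^ n) r') \<noteq> 0" using nz eq by (simp add: r_def r'_def)
  have jm: "int j = int m"
  proof -
    have e: "(S ^^ n) r * (xx+1)^n = xx ^ j * r" using j unz by simp
    have snz: "(S ^^ n) r \<noteq> 0" using nz polypart_zero_iff r_def by force
    have "degx ((S ^^ n) r) + int n = int j + int n"
      using arg_cong[OF e, of degx] snz rnz unz
      by (simp add: degx_mult degx_u_pow degx_xx_pow degx_r_of r_def)
    moreover have "degx ((S ^^ n) r) = int m"
      using degx_polypart nz by (simp add: m_def r_def)
    ultimately show ?thesis by simp
  qed
  have jm': "int j' = int m"
  proof -
    have e: "(S ^^ n) r' * (xx+1)^n = xx ^ j' * r'" using j' unz by simp
    have snz: "(S ^^ n) r' \<noteq> 0" using nz' polypart_zero_iff by force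
    have "degx ((S ^^ n) r') + int n = int j' + int n"
      using arg_cong[OF e, of degx] snz rnz unz
      by (simp add: degx_mult degx_u_pow degx_xx_pow degx_r_of r'_def)
    moreover have "degx ((S ^^ n) r') = int m"
      using degx_polypart nz' eq by (simp add: m_def r_def r'_def)
    ultimately show ?thesis by simp
  qed
  define d where "d = (S ^^ n) r - (S ^^ n) r'"
  have "polypart ((S ^^ n) r) = polypart ((S ^^ n) r') + polypart d"
    unfolding d_def polypart_add[symmetric] by simp
  hence "polypart d = 0" using eq by (simp add: r_def r'_def)
  hence dv: "d = 0 \<or> degx d < 0" using polypart_zero_iff by blast
  have dform: "d * (xx+1)^n = xx ^ m * (r - r')"
    using j j' jm jm' unz by (simp add: d_def algebra_simps)
  have vz: "\<forall>z\<ge>int n - int m. coeffx (r - r') z = 0"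
  proof (cases "d = 0")
    case True
    hence "r - r' = 0" using dform by simp
    thus ?thesis by simp
  next
    case False
    hence "degx d < 0" using dv by simp
    moreover have "r - r' \<noteq> 0" using False dform unz by auto
    moreover have "degx d + int n = int m + degx (r - r')"
      using arg_cong[OF dform, of degx] False unz \<open>r - r' \<noteq> 0\<close>
      by (simp add: degx_mult degx_u_pow degx_xx_pow)
    ultimately have "degx (r - r') < int n - int m" by simp
    thus ?thesis using vanish_iff by blast
  qed
  have im: "i < m" using i by (simp add: m_def r_def)
  have mn: "m \<le> n" using jm jn by simp
  have "coeffx (r - r') (int n - 1 - int i) = 0" using vz im by auto
  hence "coeffx r (int n - 1 - int i) = coeffx r' (int n - 1 - int i)"
    by (metis coeffx_diff right_minus_eq)
  moreover have "nat (int n - (int n - 1 - int i)) - 1 = i" by simp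
  ultimately show "c i = c' i" using im mn unfolding r_def r'_def coeffx_r_of by (simp split: if_splits)
qed

lemma density:
  assumes eq: "(T ^^ n) (Pp n c) = (T ^^ n) (Pp n c')"
    and nz: "(T ^^ n) (Pp n c) \<noteq> 0"
    and i: "i < degree ((T ^^ n) (Pp n c))"
  shows "c i = c' i"
  using density_fls[of n c c' i] assms by (simp add: Pp_def polypart_S_pow)

abbreviation xp :: "bit poly" where "xp \<equiv> [:0,1:]"

lemma bit_cases2: "(b::bit) = 0 \<or> b = 1" by (cases b) auto

lemma T_even: "poly p 1 = 0 \<Longrightarrow> p = uu * T p"
  using uu_dvd_iff[of p] by (auto simp: T_def uu_nz)

lemma odd_dvd: "poly p 1 = 1 \<Longrightarrow> uu dvd xp * p + 1"
  by (simp add: uu_dvd_iff)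

lemma T_odd: "poly p 1 = 1 \<Longrightarrow> xp * p + 1 = uu * T p"
  using odd_dvd[of p] by (auto simp: T_def uu_nz)

lemma degree_uu: "degree uu = 1" by (simp add: uu_def)

lemma T_one: "T 1 = 1"
proof -
  have "xp * 1 + 1 = uu * 1" by (simp add: uu_def one_pCons)
  hence "uu * T 1 = uu * 1" using T_odd[of 1] by simp
  thus ?thesis using uu_nz by simp
qed

lemma T_nz: "p \<noteq> 0 \<Longrightarrow> T p \<noteq> 0"
proof -
  assume p: "p \<noteq> 0"
  show ?thesis
  proof (cases "poly p 1 = 0")
    case True thus ?thesis using T_even[OF True] p by auto
  next
    case False
    hence "poly p 1 = 1" using bit_cases2 by blast
    from T_odd[OF this] have "xp * p + 1 = uu * T p" .
    moreover have "xp * p + 1 \<noteq> 0"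
    proof
      assume "xp * p + 1 = 0"
      hence "poly (xp * p + 1) 0 = 0" by simp
      thus False by simp
    qed
    ultimately show ?thesis by auto
  qed
qed

lemma degree_T:
  assumes "p \<noteq> 0"
  shows "degree (T p) = (if poly p 1 = 0 then degree p - 1 else degree p)"
proof (cases "poly p 1 = 0")
  case True
  have "degree p = degree uu + degree (T p)"
    using T_even[OF True] assms T_nz[OF assms] uu_nz degree_mult_eq by metis
  thus ?thesis using True by (simp add: degree_uu)
next
  case False
  hence o: "poly p 1 = 1" using bit_cases2 by blast
  have "degree (xp * p + 1) = degree (xp * p)"
    by (rule degree_add_eq_left) (use assms in \<open>simp add: degree_mult_eq\<close>)
  also have "\<dots> = Suc (degree p)" using assms by (simp add: degree_mult_eq)
  finally have "Suc (degree p) = degree uu + degree (T p)"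
    using T_odd[OF o] T_nz[OF assms] uu_nz degree_mult_eq by metis
  thus ?thesis using False by (simp add: degree_uu)
qed

lemma Tpow_nz: "p \<noteq> 0 \<Longrightarrow> (T ^^ k) p \<noteq> 0"
  by (induction k) (simp_all add: T_nz)

lemma degree_T_le: "p \<noteq> 0 \<Longrightarrow> degree (T p) \<le> degree p"
  using degree_T by simp

lemma degree_Tpow_le: "p \<noteq> 0 \<Longrightarrow> degree ((T ^^ k) p) \<le> degree p"
proof (induction k)
  case 0 then show ?case by simp
next
  case (Suc k)
  have "degree ((T ^^ Suc k) p) \<le> degree ((T ^^ k) p)"
    using degree_T_le[OF Tpow_nz[OF Suc.prems]] by simp
  with Suc show ?case by simp
qed

lemma degree_Tpow_ge: "p \<noteq> 0 \<Longrightarrow> degree ((T ^^ k) p) + k \<ge> degree p"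
proof (induction k)
  case 0 then show ?case by simp
next
  case (Suc k)
  have "degree ((T ^^ Suc k) p) + 1 \<ge> degree ((T ^^ k) p)"
    using degree_T[OF Tpow_nz[OF Suc.prems], of k] by (simp split: if_splits)
  with Suc show ?case by simp
qed

lemma Tpow_not_one: "p \<noteq> 0 \<Longrightarrow> k < degree p \<Longrightarrow> (T ^^ k) p \<noteq> 1"
  using degree_Tpow_ge[of p k] by fastforce

lemma degree_Tpow_count:
  assumes "p \<noteq> 0" "k \<le> degree p"
  shows "degree ((T ^^ k) p) + k = degree p + card {i. i < k \<and> poly ((T ^^ i) p) 1 = 1}"
  using assms(2)
proof (induction k)
  case 0 then show ?case by simp
next
  case (Suc k)
  have IH: "degree ((T ^^ k) p) + k = degree p + card {i. i < k \<and> poly ((T ^^ i) p) 1 = 1}"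
    using Suc by simp
  have set_eq: "{i. i < Suc k \<and> poly ((T ^^ i) p) 1 = 1} =
       {i. i < k \<and> poly ((T ^^ i) p) 1 = 1} \<union> (if poly ((T ^^ k) p) 1 = 1 then {k} else {})"
    by (auto simp: less_Suc_eq)
  have card_eq: "card {i. i < Suc k \<and> poly ((T ^^ i) p) 1 = 1} =
       card {i. i < k \<and> poly ((T ^^ i) p) 1 = 1} + (if poly ((T ^^ k) p) 1 = 1 then 1 else 0)"
    unfolding set_eq by (auto simp: card_insert_if)
  have dk: "degree ((T ^^ k) p) \<ge> 1" using degree_Tpow_ge[OF assms(1), of k] Suc.prems by linarith
  have "degree ((T ^^ Suc k) p) = (if poly ((T ^^ k) p) 1 = 0 then degree ((T ^^ k) p) - 1 else degree ((T ^^ k) p))"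
    using degree_T[OF Tpow_nz[OF assms(1)], of k] by simp
  then show ?case using IH card_eq dk bit_cases2[of "poly ((T ^^ k) p) 1"] by auto
qed

lemma order_uu: "order 1 uu = 1"
  using order_power_n_n[of "1::bit" 1] by (simp add: uu_def)

lemma order_xp: "order 1 xp = 0"
  by (rule order_0I) simp

lemma uu_eq: "uu = xp + 1" by (simp add: uu_def one_pCons)

lemma bitpoly_add_self: "(a::bit poly) + a = 0"
proof (rule poly_eqI)
  fix n
  have "coeff a n + coeff a n = 0" by (cases "coeff a n") auto
  thus "coeff (a + a) n = coeff 0 n" by (simp only: coeff_add coeff_0)
qed

lemma bitpoly_neg: "- (a::bit poly) = a"
  by (rule poly_eqI) simp

lemma uu_pow_dvd_xp: "uu ^ k dvd xp * q \<Longrightarrow> uu ^ k dvd q"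
proof (induction k arbitrary: q)
  case 0 then show ?case by simp
next
  case (Suc k)
  have "uu dvd uu ^ Suc k" by simp
  hence "uu dvd xp * q" using Suc.prems by (rule dvd_trans)
  hence "poly (xp * q) 1 = 0" by (simp add: uu_dvd_iff)
  hence "poly q 1 = 0" by simp
  then obtain q1 where q1: "q = uu * q1" using uu_dvd_iff by blast
  have "uu * uu ^ k dvd uu * (xp * q1)" using Suc.prems q1
    by (metis power_Suc mult.left_commute)
  hence "uu ^ k dvd xp * q1" using uu_nz by (metis dvd_mult_cancel_left)
  hence "uu ^ k dvd q1" by (rule Suc.IH)
  thus ?case using q1 by simp
qed

lemma odd_step_g: "poly p 1 = 1 \<Longrightarrow> uu * (T p + 1) = xp * (p + 1)"
proof -
  assume o: "poly p 1 = 1"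
  have "uu * (T p + 1) = (xp * p + 1) + uu" using T_odd[OF o] by (simp add: algebra_simps)
  also have "\<dots> = xp * p + xp + (1 + 1)" by (simp add: uu_eq algebra_simps)
  also have "\<dots> = xp * (p + 1)" by (simp add: bitpoly_add_self algebra_simps)
  finally show ?thesis .
qed

definition muT :: "bit poly \<Rightarrow> nat" where
  "muT p = degree p * (degree p + 1) + order 1 (p + 1)"

lemma bit_poly_deg0: "p \<noteq> 0 \<Longrightarrow> degree p = 0 \<Longrightarrow> p = (1 :: bit poly)"
proof -
  assume "p \<noteq> 0" "degree p = 0"
  then obtain a where "p = [:a:]" "a \<noteq> 0" by (metis degree_eq_zeroE pCons_0_0)
  thus ?thesis by (simp add: one_pCons)
qed

lemma reach_one: "p \<noteq> 0 \<Longrightarrow> \<exists>k. (T ^^ k) p = 1"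
proof (induction "muT p" arbitrary: p rule: less_induct)
  case (less p)
  show ?case
  proof (cases "p = 1")
    case True then show ?thesis by (intro exI[of _ 0]) simp
  next
    case p1: False
    show ?thesis
    proof (cases "T p = 1")
      case True then show ?thesis by (intro exI[of _ 1]) simp
    next
      case Tp1: False
      have d1: "degree p \<ge> 1" using bit_poly_deg0[OF less.prems] p1 by (cases "degree p") auto
      have Tnz: "T p \<noteq> 0" using T_nz[OF less.prems] .
      have Tp1': "T p + 1 \<noteq> 0"
      proof
        assume "T p + 1 = 0"
        hence "T p = - 1" by (simp add: eq_neg_iff_add_eq_0)
        thus False using Tp1 by (simp add: bitpoly_neg)
      qed
      have "muT (T p) < muT p"
      proof (cases "poly p 1 = 0")
        case True
        have dT: "degree (T p) = degree p - 1" using degree_T[OF less.prems] True by simp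
        have "order 1 (T p + 1) \<le> degree (T p + 1)" by (rule order_degree[OF Tp1'])
        also have "\<dots> \<le> degree (T p)" by (simp add: degree_add_le)
        finally have "order 1 (T p + 1) \<le> degree p - 1" using dT by simp
        hence "muT (T p) \<le> (degree p - 1) * degree p + (degree p - 1)"
          unfolding muT_def dT using d1 by simp
        also have "\<dots> < degree p * (degree p + 1)" using d1
          by (cases "degree p") (auto simp: algebra_simps)
        finally show ?thesis unfolding muT_def by simp
      next
        case False
        hence o: "poly p 1 = 1" using bit_cases2 by blast
        have dT: "degree (T p) = degree p" using degree_T[OF less.prems] False by simp
        have p1': "p + 1 \<noteq> 0"
        proof
          assume "p + 1 = 0"
          hence "p = - 1" by (simp add: eq_neg_iff_add_eq_0)
          thus False using p1 by (simp add: bitpoly_neg)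
        qed
        have e: "uu * (T p + 1) = xp * (p + 1)" by (rule odd_step_g[OF o])
        have "order 1 (uu * (T p + 1)) = order 1 (xp * (p + 1))" using e by simp
        moreover have "order 1 (uu * (T p + 1)) = order 1 uu + order 1 (T p + 1)"
          by (rule order_mult) (use Tp1' uu_nz in simp)
        moreover have "order 1 (xp * (p + 1)) = order 1 xp + order 1 (p + 1)"
          by (rule order_mult) (use p1' in simp)
        ultimately have "order 1 uu + order 1 (T p + 1) = order 1 xp + order 1 (p + 1)"
          by simp
        hence "order 1 (T p + 1) < order 1 (p + 1)" by (simp add: order_uu order_xp)
        thus ?thesis unfolding muT_def dT by simp
      qed
      then obtain k where "(T ^^ k) (T p) = 1" using less.hyps Tnz by blast
      hence "(T ^^ Suc k) p = 1" by (simp add: funpow_Suc_right del: funpow.simps)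
      thus ?thesis by blast
    qed
  qed
qed

lemma Least_shift:
  fixes n :: nat
  assumes "\<forall>k<n. \<not> P k" "\<exists>k. P k"
  shows "(LEAST k. P k) = n + (LEAST k. P (n + k))"
proof -
  obtain k0 where k0: "P k0" using assms(2) by blast
  have "k0 \<ge> n"
  proof (rule ccontr)
    assume "\<not> n \<le> k0"
    hence "k0 < n" by simp
    with assms(1) k0 show False by blast
  qed
  hence ex: "\<exists>k. P (n + k)" using k0 by (metis le_add_diff_inverse)
  define L where "L = (LEAST k. P (n + k))"
  have PL: "P (n + L)" unfolding L_def by (rule LeastI_ex[OF ex])
  have le1: "(LEAST k. P k) \<le> n + L" using PL by (rule Least_le)
  have PLe: "P (LEAST k. P k)" by (rule LeastI_ex[OF assms(2)])
  have ge: "(LEAST k. P k) \<ge> n"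
  proof (rule ccontr)
    assume "\<not> n \<le> (LEAST k. P k)"
    with assms(1) PLe show False by auto
  qed
  then obtain j where j: "(LEAST k. P k) = n + j" by (metis le_add_diff_inverse)
  hence "P (n + j)" using PLe by simp
  hence "L \<le> j" unfolding L_def by (rule Least_le)
  thus ?thesis using le1 j L_def by simp
qed

lemma tauP_shift:
  assumes "p \<noteq> 0" "degree p = n"
  shows "tauP p = n + tauP ((T ^^ n) p)"
proof -
  have "\<forall>k<n. \<not> (T ^^ k) p = 1" using Tpow_not_one[OF assms(1)] assms(2) by blast
  moreover have "\<exists>k. (T ^^ k) p = 1" using reach_one[OF assms(1)] .
  ultimately have "tauP p = n + (LEAST k. (T ^^ (n + k)) p = 1)"
    unfolding tauP_def by (rule Least_shift)
  also have "(\<lambda>k. (T ^^ (n + k)) p = 1) = (\<lambda>k. (T ^^ k) ((T ^^ n) p) = 1)"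
    by (simp add: funpow_add add.commute)
  finally show ?thesis by (simp add: tauP_def)
qed

lemma uadic:
  "(\<forall>i<k. poly ((T ^^ i) p) 1 = poly ((T ^^ i) p') 1) \<Longrightarrow> uu ^ k dvd (p - p')"
proof (induction k arbitrary: p p')
  case 0 then show ?case by simp
next
  case (Suc k)
  have "\<forall>i<k. poly ((T ^^ i) (T p)) 1 = poly ((T ^^ i) (T p')) 1"
  proof (intro allI impI)
    fix i assume "i < k"
    hence "Suc i < Suc k" by simp
    with Suc.prems have "poly ((T ^^ Suc i) p) 1 = poly ((T ^^ Suc i) p') 1" by blast
    thus "poly ((T ^^ i) (T p)) 1 = poly ((T ^^ i) (T p')) 1"
      by (simp add: funpow_Suc_right del: funpow.simps)
  qed
  hence IH: "uu ^ k dvd (T p - T p')" using Suc.IH by blast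
  have par: "poly p 1 = poly p' 1" using Suc.prems by (metis funpow_0 zero_less_Suc)
  show ?case
  proof (cases "poly p 1 = 0")
    case True
    hence "p - p' = uu * (T p - T p')"
      using T_even[OF True] T_even[of p'] par by (metis right_diff_distrib)
    thus ?thesis using IH by (simp add: mult_dvd_mono)
  next
    case False
    hence o: "poly p 1 = 1" "poly p' 1 = 1" using bit_cases2 par by metis+
    have "xp * (p - p') = uu * (T p - T p')"
      using T_odd[OF o(1)] T_odd[OF o(2)]
      by (metis (no_types, lifting) add_diff_cancel_right right_diff_distrib)
    hence "uu ^ Suc k dvd xp * (p - p')" using IH by (simp add: mult_dvd_mono)
    thus ?thesis by (rule uu_pow_dvd_xp)
  qed
qed

lemma parity_inj:
  assumes "\<forall>i<n. poly ((T ^^ i) (Pp n c)) 1 = poly ((T ^^ i) (Pp n c')) 1"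
    and "i < n"
  shows "c i = c' i"
proof -
  have dv: "uu ^ n dvd (Pp n c - Pp n c')" using uadic assms(1) by blast
  have "Pp n c - Pp n c' = 0"
  proof (rule ccontr)
    assume nz: "Pp n c - Pp n c' \<noteq> 0"
    have "degree (Pp n c - Pp n c') < n"
    proof -
      have "degree (Pp n c - Pp n c') \<le> n - 1"
      proof (rule degree_le, intro allI impI)
        fix j assume "n - 1 < j"
        show "coeff (Pp n c - Pp n c') j = 0"
          using \<open>n - 1 < j\<close> assms(2) by (auto simp: coeff_Pp)
      qed
      thus ?thesis using assms(2) by linarith
    qed
    moreover have "degree (uu ^ n) \<le> degree (Pp n c - Pp n c')"
      by (rule dvd_imp_degree_le[OF dv nz])
    moreover have "degree (uu ^ n) = n" by (simp add: degree_power_eq degree_uu uu_nz)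
    ultimately show False by simp
  qed
  hence "coeff (Pp n c) (n - 1 - i) = coeff (Pp n c') (n - 1 - i)" by simp
  moreover have "n - 1 - (n - 1 - i) = i" "\<not> n < n - 1 - i" "n - 1 - i \<noteq> n" using assms(2) by auto
  ultimately show ?thesis unfolding coeff_Pp by simp
qed

definition V :: "nat \<Rightarrow> (nat \<Rightarrow> bit) set" where
  "V n = PiE {..<n} (\<lambda>_. UNIV)"

lemma UNIV_bit: "(UNIV :: bit set) = {0, 1}"
  using bit_cases2 by auto

lemma finite_UNIV_bit[simp]: "finite (UNIV :: bit set)"
  by (simp add: UNIV_bit)

lemma card_UNIV_bit: "card (UNIV :: bit set) = 2"
  by (simp add: UNIV_bit)

lemma finite_V[simp]: "finite (V n)"
  by (simp add: V_def finite_PiE)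

lemma card_V: "card (V n) = 2 ^ n"
  by (simp add: V_def card_PiE card_UNIV_bit)

lemma V_ext: "c \<in> V n \<Longrightarrow> c' \<in> V n \<Longrightarrow> (\<And>i. i < n \<Longrightarrow> c i = c' i) \<Longrightarrow> c = c'"
  unfolding V_def by (rule PiE_ext) auto

definition Phi :: "nat \<Rightarrow> (nat \<Rightarrow> bit) \<Rightarrow> (nat \<Rightarrow> bit)" where
  "Phi n c = (\<lambda>i\<in>{..<n}. poly ((T ^^ i) (Pp n c)) 1)"

lemma Phi_V: "Phi n c \<in> V n" by (simp add: Phi_def V_def)

lemma inj_Phi: "inj_on (Phi n) (V n)"
proof (rule inj_onI)
  fix c c' assume c: "c \<in> V n" "c' \<in> V n" and eq: "Phi n c = Phi n c'"
  have "\<forall>i<n. poly ((T ^^ i) (Pp n c)) 1 = poly ((T ^^ i) (Pp n c')) 1"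
  proof (intro allI impI)
    fix i assume "i < n"
    thus "poly ((T ^^ i) (Pp n c)) 1 = poly ((T ^^ i) (Pp n c')) 1"
      using fun_cong[OF eq, of i] by (simp add: Phi_def)
  qed
  hence "\<And>i. i < n \<Longrightarrow> c i = c' i" using parity_inj by blast
  thus "c = c'" using V_ext c by blast
qed

lemma degree_Tn: "degree ((T ^^ n) (Pp n c)) = card {i. i < n \<and> Phi n c i = 1}"
proof -
  have "degree ((T ^^ n) (Pp n c)) + n = n + card {i. i < n \<and> poly ((T ^^ i) (Pp n c)) 1 = 1}"
    using degree_Tpow_count[OF Pp_nz, of n n c] by (simp add: degree_Pp)
  moreover have "{i. i < n \<and> poly ((T ^^ i) (Pp n c)) 1 = 1} = {i. i < n \<and> Phi n c i = 1}"
    by (auto simp: Phi_def)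
  ultimately show ?thesis by simp
qed

lemma card_ones_le: "card {v \<in> V n. card {i. i < n \<and> v i = 1} = m} \<le> n choose m"
proof -
  let ?g = "\<lambda>v. {i. i < n \<and> v i = (1::bit)}"
  have inj: "inj_on ?g (V n)"
  proof (rule inj_onI)
    fix v w assume vw: "v \<in> V n" "w \<in> V n" "?g v = ?g w"
    show "v = w"
    proof (rule V_ext[OF vw(1,2)])
      fix i assume i: "i < n"
      have "(v i = 1) = (w i = 1)" using vw(3) i by blast
      thus "v i = w i" using bit_cases2[of "v i"] bit_cases2[of "w i"] by auto
    qed
  qed
  have "card {v \<in> V n. card (?g v) = m} = card (?g ` {v \<in> V n. card (?g v) = m})"
    by (rule card_image[symmetric]) (rule inj_on_subset[OF inj], auto)
  also have "\<dots> \<le> card {B. B \<subseteq> {..<n} \<and> card B = m}"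
    by (rule card_mono) auto
  also have "\<dots> = n choose m" by (simp add: n_subsets)
  finally show ?thesis .
qed

lemma card_deg_le: "card {c \<in> V n. degree ((T ^^ n) (Pp n c)) = m} \<le> n choose m"
proof -
  have "card {c \<in> V n. degree ((T ^^ n) (Pp n c)) = m} =
        card (Phi n ` {c \<in> V n. degree ((T ^^ n) (Pp n c)) = m})"
    by (rule card_image[symmetric]) (rule inj_on_subset[OF inj_Phi], auto)
  also have "\<dots> \<le> card {v \<in> V n. card {i. i < n \<and> v i = 1} = m}"
    by (rule card_mono) (auto simp: Phi_V degree_Tn)
  also have "\<dots> \<le> n choose m" by (rule card_ones_le)
  finally show ?thesis .
qed

definition psi :: "nat \<Rightarrow> nat \<Rightarrow> (nat \<Rightarrow> bit) \<Rightarrow> (nat \<Rightarrow> bit)" where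
  "psi n m c = (\<lambda>i\<in>{..<m}. coeff ((T ^^ n) (Pp n c)) (m - 1 - i))"

lemma psi_V: "psi n m c \<in> V m" by (simp add: psi_def V_def)

lemma Pp_psi:
  assumes "degree ((T ^^ n) (Pp n c)) = m"
  shows "Pp m (psi n m c) = (T ^^ n) (Pp n c)"
proof (rule poly_eqI)
  fix i
  let ?h = "(T ^^ n) (Pp n c)"
  have hnz: "?h \<noteq> 0" by (rule Tpow_nz[OF Pp_nz])
  have lc: "coeff ?h m = 1" using hnz assms by (metis bit_not_zero_iff leading_coeff_0_iff)
  show "coeff (Pp m (psi n m c)) i = coeff ?h i"
  proof (cases "i < m")
    case True
    hence "m - 1 - (m - 1 - i) = i" "m - 1 - i < m" by auto
    thus ?thesis using True by (simp add: coeff_Pp psi_def)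
  next
    case False
    thus ?thesis using lc assms by (auto simp: coeff_Pp coeff_eq_0)
  qed
qed

lemma fiber_card:
  assumes "m \<le> n"
  shows "card {c \<in> V n. \<forall>i<m. c i = c0 i} \<le> 2 ^ (n - m)"
proof -
  let ?A = "{c \<in> V n. \<forall>i<m. c i = c0 i}"
  have inj: "inj_on (\<lambda>c. restrict c {m..<n}) ?A"
  proof (rule inj_onI)
    fix c c' assume cc: "c \<in> ?A" "c' \<in> ?A" "restrict c {m..<n} = restrict c' {m..<n}"
    show "c = c'"
    proof (rule V_ext)
      show "c \<in> V n" "c' \<in> V n" using cc by auto
      fix i assume "i < n"
      show "c i = c' i"
      proof (cases "i < m")
        case True thus ?thesis using cc by auto
      next
        case False
        hence "i \<in> {m..<n}" using \<open>i < n\<close> by auto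
        thus ?thesis using fun_cong[OF cc(3), of i] by simp
      qed
    qed
  qed
  have "card ?A = card ((\<lambda>c. restrict c {m..<n}) ` ?A)" by (rule card_image[symmetric, OF inj])
  also have "\<dots> \<le> card (PiE {m..<n} (\<lambda>_. UNIV :: bit set))"
    by (rule card_mono) (auto simp: finite_PiE)
  also have "\<dots> = 2 ^ (n - m)" by (simp add: card_PiE card_UNIV_bit)
  finally show ?thesis .
qed

lemma density_sum:
  fixes f :: "bit poly \<Rightarrow> real"
  assumes f: "\<And>h. f h \<ge> 0" and mn: "m \<le> n"
  shows "(\<Sum>c\<in>{c \<in> V n. degree ((T ^^ n) (Pp n c)) = m}. f ((T ^^ n) (Pp n c)))
         \<le> 2 ^ (n - m) * (\<Sum>y\<in>V m. f (Pp m y))"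
proof -
  let ?A = "{c \<in> V n. degree ((T ^^ n) (Pp n c)) = m}"
  have "(\<Sum>c\<in>?A. f ((T ^^ n) (Pp n c))) = (\<Sum>c\<in>?A. f (Pp m (psi n m c)))"
  proof (rule sum.cong[OF refl])
    fix c assume "c \<in> ?A"
    hence "degree ((T ^^ n) (Pp n c)) = m" by simp
    from Pp_psi[OF this] show "f ((T ^^ n) (Pp n c)) = f (Pp m (psi n m c))" by simp
  qed
  also have "\<dots> = (\<Sum>y\<in>V m. \<Sum>c\<in>{c \<in> ?A. psi n m c = y}. f (Pp m (psi n m c)))"
    by (rule sum.group[symmetric]) (simp_all add: image_subset_iff psi_V)
  also have "\<dots> = (\<Sum>y\<in>V m. real (card {c \<in> ?A. psi n m c = y}) * f (Pp m y))"
  proof (rule sum.cong[OF refl])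
    fix y assume "y \<in> V m"
    have "(\<Sum>c\<in>{c \<in> ?A. psi n m c = y}. f (Pp m (psi n m c))) =
          (\<Sum>c\<in>{c \<in> ?A. psi n m c = y}. f (Pp m y))"
      by (rule sum.cong[OF refl]) (simp only: mem_Collect_eq)
    also have "\<dots> = real (card {c \<in> ?A. psi n m c = y}) * f (Pp m y)"
      by (simp only: sum_constant)
    finally show "(\<Sum>c\<in>{c \<in> ?A. psi n m c = y}. f (Pp m (psi n m c))) =
          real (card {c \<in> ?A. psi n m c = y}) * f (Pp m y)" .
  qed
  also have "\<dots> \<le> (\<Sum>y\<in>V m. 2 ^ (n - m) * f (Pp m y))"
  proof (rule sum_mono)
    fix y assume "y \<in> V m"
    have "card {c \<in> ?A. psi n m c = y} \<le> 2 ^ (n - m)"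
    proof (cases "{c \<in> ?A. psi n m c = y} = {}")
      case True show ?thesis unfolding True by simp
    next
      case False
      then obtain c0 where c0: "c0 \<in> ?A" "psi n m c0 = y" by blast
      have "{c \<in> ?A. psi n m c = y} \<subseteq> {c \<in> V n. \<forall>i<m. c i = c0 i}"
      proof
        fix c assume "c \<in> {c \<in> ?A. psi n m c = y}"
        hence c: "c \<in> V n" "degree ((T ^^ n) (Pp n c)) = m" "psi n m c = y" by auto
        have "\<forall>i<m. c i = c0 i"
        proof (intro allI impI)
          fix i assume "i < m"
          have e1: "Pp m (psi n m c) = (T ^^ n) (Pp n c)" by (rule Pp_psi[OF c(2)])
          have e2: "Pp m (psi n m c0) = (T ^^ n) (Pp n c0)" using c0(1) by (intro Pp_psi) simp
          have "(T ^^ n) (Pp n c) = (T ^^ n) (Pp n c0)"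
            using e1 e2 c(3) c0(2) by metis
          moreover have "(T ^^ n) (Pp n c) \<noteq> 0" by (rule Tpow_nz[OF Pp_nz])
          ultimately show "c i = c0 i" using density[of n c c0 i] c \<open>i < m\<close> by simp
        qed
        thus "c \<in> {c \<in> V n. \<forall>i<m. c i = c0 i}" using c by simp
      qed
      hence "card {c \<in> ?A. psi n m c = y} \<le> card {c \<in> V n. \<forall>i<m. c i = c0 i}"
        by (rule card_mono[rotated]) simp
      also have "\<dots> \<le> 2 ^ (n - m)" by (rule fiber_card[OF mn])
      finally show ?thesis .
    qed
    hence "real (card {c \<in> ?A. psi n m c = y}) \<le> real (2 ^ (n - m))"
      by (simp only: of_nat_le_iff)
    hence "real (card {c \<in> ?A. psi n m c = y}) \<le> 2 ^ (n - m)" by simp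
    thus "real (card {c \<in> ?A. psi n m c = y}) * f (Pp m y) \<le> 2 ^ (n - m) * f (Pp m y)"
      using f by (rule mult_right_mono)
  qed
  also have "\<dots> = 2 ^ (n - m) * (\<Sum>y\<in>V m. f (Pp m y))" by (simp add: sum_distrib_left)
  finally show ?thesis .
qed

definition Zs :: "real \<Rightarrow> nat \<Rightarrow> real" where
  "Zs b n = (\<Sum>c\<in>V n. exp (- b * real (tauP (Pp n c)))) / 2 ^ n"

lemma Zs_nonneg: "Zs b n \<ge> 0"
  unfolding Zs_def by (intro divide_nonneg_pos sum_nonneg) auto

lemma Zs_le1: assumes "b \<ge> 0" shows "Zs b n \<le> 1"
proof -
  have "(\<Sum>c\<in>V n. exp (- b * real (tauP (Pp n c)))) \<le> (\<Sum>c\<in>V n. 1)"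
    by (rule sum_mono) (use assms in simp)
  also have "\<dots> = 2 ^ n" by (simp add: card_V)
  finally show ?thesis unfolding Zs_def by simp
qed

lemma GF_step:
  assumes b: "b \<ge> 0"
  shows "Zs b n \<le> exp (- b * n) * (\<Sum>m\<le>n. min (real (n choose m) / 2 ^ n) (Zs b m))"
proof -
  define g where "g h = exp (- b * real (tauP h))" for h
  define H where "H c = (T ^^ n) (Pp n c)" for c
  have g01: "g h \<ge> 0" "g h \<le> 1" for h using b by (auto simp: g_def)
  have shift: "exp (- b * real (tauP (Pp n c))) = exp (- b * n) * g (H c)" for c
  proof -
    have "tauP (Pp n c) = n + tauP (H c)"
      unfolding H_def by (rule tauP_shift[OF Pp_nz degree_Pp])
    thus ?thesis by (simp add: g_def algebra_simps exp_add[symmetric])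
  qed
  have degH: "degree (H c) \<le> n" for c
    unfolding H_def using degree_Tpow_le[OF Pp_nz[of n c], of n] by (simp add: degree_Pp)
  have "(\<Sum>c\<in>V n. g (H c)) = (\<Sum>m\<in>{..n}. \<Sum>c\<in>{c \<in> V n. degree (H c) = m}. g (H c))"
    by (rule sum.group[symmetric]) (use degH in auto)
  also have "\<dots> \<le> (\<Sum>m\<in>{..n}. 2 ^ n * min (real (n choose m) / 2 ^ n) (Zs b m))"
  proof (rule sum_mono)
    fix m assume "m \<in> {..n}"
    hence mn: "m \<le> n" by simp
    let ?A = "{c \<in> V n. degree (H c) = m}"
    have i1: "(\<Sum>c\<in>?A. g (H c)) \<le> real (n choose m)"
    proof -
      have "(\<Sum>c\<in>?A. g (H c)) \<le> (\<Sum>c\<in>?A. 1)" by (rule sum_mono) (simp add: g01)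
      also have "\<dots> = real (card ?A)" by simp
      also have "\<dots> \<le> real (n choose m)"
        using card_deg_le[of n m] unfolding H_def by (simp only: of_nat_le_iff)
      finally show ?thesis .
    qed
    have i2: "(\<Sum>c\<in>?A. g (H c)) \<le> 2 ^ n * Zs b m"
    proof -
      have "(\<Sum>c\<in>?A. g (H c)) \<le> 2 ^ (n - m) * (\<Sum>y\<in>V m. g (Pp m y))"
        unfolding H_def by (rule density_sum[OF g01(1) mn])
      also have "(\<Sum>y\<in>V m. g (Pp m y)) = 2 ^ m * Zs b m"
        by (simp add: Zs_def g_def)
      also have "2 ^ (n - m) * (2 ^ m * Zs b m) = (2::real) ^ n * Zs b m"
        using mn by (simp add: power_add[symmetric] mult.assoc[symmetric])
      finally show ?thesis .
    qed
    have "min (real (n choose m)) (2 ^ n * Zs b m) = 2 ^ n * min (real (n choose m) / 2 ^ n) (Zs b m)"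
      by (simp add: min_mult_distrib_left)
    with i1 i2 show "(\<Sum>c\<in>?A. g (H c)) \<le> 2 ^ n * min (real (n choose m) / 2 ^ n) (Zs b m)"
      by (metis min.boundedI)
  qed
  also have "\<dots> = 2 ^ n * (\<Sum>m\<le>n. min (real (n choose m) / 2 ^ n) (Zs b m))"
    by (simp add: sum_distrib_left)
  finally have main: "(\<Sum>c\<in>V n. g (H c)) \<le> 2 ^ n * (\<Sum>m\<le>n. min (real (n choose m) / 2 ^ n) (Zs b m))" .
  have "(\<Sum>c\<in>V n. exp (- b * real (tauP (Pp n c)))) = (\<Sum>c\<in>V n. exp (- b * n) * g (H c))"
    by (rule sum.cong[OF refl]) (rule shift)
  hence "Zs b n = exp (- b * n) * (\<Sum>c\<in>V n. g (H c)) / 2 ^ n"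
    unfolding Zs_def by (simp only: sum_distrib_left)
  also have "\<dots> \<le> exp (- b * n) * (2 ^ n * (\<Sum>m\<le>n. min (real (n choose m) / 2 ^ n) (Zs b m))) / 2 ^ n"
    by (intro divide_right_mono mult_left_mono main) auto
  also have "\<dots> = exp (- b * n) * (\<Sum>m\<le>n. min (real (n choose m) / 2 ^ n) (Zs b m))" by simp
  finally show ?thesis .
qed

lemma binom_tail:
  fixes n :: nat and e :: real
  assumes n: "n > 0" and e: "e \<ge> 0"
  shows "(\<Sum>m\<in>{m. m \<le> n \<and> real m < (1/2 - e) * n}. real (n choose m) / 2 ^ n) \<le> exp (-2 * real n * e\<^sup>2)"
proof -
  let ?L = "{m. m \<le> n \<and> real m < (1/2 - e) * n}"
  have fin: "finite ?L" by (rule finite_subset[of _ "{..n}"]) auto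
  have "(\<Sum>m\<in>?L. real (n choose m) / 2 ^ n) = (\<Sum>m\<in>?L. pmf (binomial_pmf n (1/2)) m)"
  proof (rule sum.cong[OF refl])
    fix m assume "m \<in> ?L"
    hence mn: "m \<le> n" by simp
    have h: "(1 - 1/2::real) = 1/2" by simp
    have "pmf (binomial_pmf n (1/2)) m = real (n choose m) * (1/2) ^ m * (1 - 1/2) ^ (n - m)"
      by (rule pmf_binomial) auto
    also have "\<dots> = real (n choose m) * (1/2) ^ m * (1/2) ^ (n - m)" by (simp only: h)
    also have "\<dots> = real (n choose m) * ((1/2) ^ m * (1/2) ^ (n - m))"
      by (simp only: mult.assoc)
    also have "(1/2::real) ^ m * (1/2) ^ (n - m) = (1/2) ^ (m + (n - m))"
      by (rule power_add[symmetric])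
    also have "m + (n - m) = n" using mn by simp
    finally show "real (n choose m) / 2 ^ n = pmf (binomial_pmf n (1/2)) m"
      by (simp only: power_one_over divide_inverse mult_1 power_inverse)
  qed
  also have "\<dots> = measure_pmf.prob (binomial_pmf n (1/2)) ?L"
    by (rule measure_measure_pmf_finite[symmetric, OF fin])
  also have "\<dots> \<le> measure_pmf.prob (binomial_pmf n (1/2)) {x. real x / real n \<le> 1/2 - e}"
  proof (rule measure_pmf.finite_measure_mono)
    show "?L \<subseteq> {x. real x / real n \<le> 1/2 - e}"
    proof
      fix x assume "x \<in> ?L"
      hence "real x < (1/2 - e) * n" by simp
      thus "x \<in> {x. real x / real n \<le> 1/2 - e}" using n by (simp add: divide_le_eq)
    qed
  qed simp
  also have "\<dots> \<le> exp (real_of_int (- 2 * int n) * e\<^sup>2)"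
    by (rule binomial_distribution.prob_le') (use n e in \<open>auto simp: binomial_distribution_def\<close>)
  also have "exp (real_of_int (- 2 * int n) * e\<^sup>2) = exp (-2 * real n * e\<^sup>2)" by simp
  finally show ?thesis .
qed

lemma geom_tail:
  fixes t :: real
  assumes "0 \<le> t" "t < 1"
  shows "(\<Sum>m\<in>{m0..<n}. t ^ m) \<le> t ^ m0 / (1 - t)"
proof (cases "m0 \<le> n")
  case True
  have "(\<Sum>m\<in>{m0..<n}. t ^ m) = (\<Sum>j<n - m0. t ^ (m0 + j))"
    by (rule sum.reindex_bij_witness[of _ "\<lambda>j. m0 + j" "\<lambda>m. m - m0"]) (use True in auto)
  also have "\<dots> = t ^ m0 * (\<Sum>j<n - m0. t ^ j)" by (simp add: power_add sum_distrib_left)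
  also have "(\<Sum>j<n - m0. t ^ j) = (1 - t ^ (n - m0)) / (1 - t)"
    using assms by (simp add: sum_gp_strict)
  also have "\<dots> \<le> 1 / (1 - t)" using assms by (intro divide_right_mono) auto
  finally show ?thesis using assms by (simp add: mult_left_mono divide_inverse)
next
  case False
  thus ?thesis using assms by simp
qed

lemma exp_ge3: "ln 3 \<le> x \<Longrightarrow> 3 \<le> exp (x::real)"
  by (metis exp_le_cancel_iff exp_ln zero_less_numeral)

lemma ln3_le2: "ln (3::real) \<le> 2"
  using ln_le_minus_one[of 3] by simp

lemma analysis:
  fixes Z :: "nat \<Rightarrow> real" and d :: real
  assumes d: "0 < d" "d \<le> 1/2"
    and Z0: "\<And>n. 0 \<le> Z n" and Z1: "\<And>n. Z n \<le> 1"
    and rec: "\<And>n. Z n \<le> exp (- ((d/8)\<^sup>2) * n) * (\<Sum>m\<le>n. min (real (n choose m) / 2 ^ n) (Z m))"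
  shows "\<exists>K. \<forall>n. Z n \<le> K * exp (-(2-d) * (d/8)\<^sup>2 * n)"
proof -
  define e where "e = d/8"
  define b where "b = (d/8)\<^sup>2"
  have e2: "e\<^sup>2 = b" by (simp add: e_def b_def)
  have b0: "b > 0" using d by (simp add: b_def)
  have b1: "b \<le> 1/256"
  proof -
    have "d/8 \<le> 1/16" using d by simp
    hence "(d/8)\<^sup>2 \<le> (1/16)\<^sup>2" using d by (intro power_mono) auto
    thus ?thesis by (simp add: b_def power2_eq_square)
  qed
  define E where "E n = exp (-(2-d) * b * real n)" for n
  have negmul: "- (2 - d) * b * x = - ((2 - d) * b * x)" for x by (simp only: mult_minus_left)
  define th where "th = exp (-(2-d) * b)"
  have db: "(2 - d) * b > 0" using d b0 by simp
  have th01: "0 < th" "th < 1" using db by (auto simp: th_def algebra_simps)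
  have Eth: "E n = th ^ n" for n
    unfolding E_def th_def by (simp add: exp_of_nat_mult[symmetric] algebra_simps)
  have Epos: "E n > 0" for n by (simp add: E_def)
  define N1 where "N1 = nat \<lceil>ln 3 / b\<rceil>"
  define N2 where "N2 = nat \<lceil>4 * ln (3 / (1 - th)) / (b * d)\<rceil>"
  define N0 where "N0 = max 4 (max N1 N2)"
  define K where "K = 1 / E N0"
  have K1: "K \<ge> 1"
  proof -
    have "0 \<le> (2 - d) * b * real N0" using mult_nonneg_nonneg[of "(2-d)*b" "real N0"] db by simp
    moreover have h: "- (2 - d) * b * real N0 = - ((2 - d) * b * real N0)" by (simp only: mult_minus_left)
    ultimately have "E N0 \<le> 1" unfolding E_def h by simp
    thus ?thesis using Epos[of N0] by (simp add: K_def)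
  qed
  have Emono: "E N0 \<le> E n" if "n \<le> N0" for n
  proof -
    have "(2 - d) * b * real n \<le> (2 - d) * b * real N0"
      using mult_left_mono[of "real n" "real N0" "(2-d)*b"] db that by simp
    thus ?thesis unfolding E_def negmul by simp
  qed
  have main: "Z n \<le> K * E n" for n
  proof (induction n rule: less_induct)
    case (less n)
    show ?case
    proof (cases "n < N0")
      case True
      have "1 \<le> K * E n"
        using Emono[of n] True Epos[of N0] by (simp add: K_def field_simps)
      thus ?thesis using Z1[of n] by linarith
    next
      case False
      hence nN: "n \<ge> N0" by simp
      hence n4: "n \<ge> 4" and nN1: "n \<ge> N1" and nN2: "n \<ge> N2" by (auto simp: N0_def)
      have npos: "n > 0" using n4 by simp
      have F1: "3 \<le> exp (b * n)"
      proof (rule exp_ge3)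
        have "ln 3 / b \<le> real N1" unfolding N1_def by linarith
        also have "\<dots> \<le> real n" using nN1 by simp
        finally show "ln 3 \<le> b * n" using b0 by (simp add: field_simps)
      qed
      have F2: "3 / (1 - th) \<le> exp (b * d * n / 4)"
      proof -
        have "4 * ln (3 / (1 - th)) / (b * d) \<le> real N2" unfolding N2_def by linarith
        also have "\<dots> \<le> real n" using nN2 by simp
        finally have "ln (3 / (1 - th)) \<le> b * d * n / 4" using b0 d by (simp add: field_simps)
        hence "exp (ln (3 / (1 - th))) \<le> exp (b * d * n / 4)" by simp
        thus ?thesis using th01 by simp
      qed
      have F3: "3 * exp ((1 - d) * b * n) \<le> 2 ^ n"
      proof -
        have l2: "ln 2 \<ge> (2/3::real)" by (rule ln2_ge_two_thirds)
        have "ln 3 \<le> n * ln 2 - (1 - d) * b * n"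
        proof -
          have "(1 - d) * b \<le> b" by (rule mult_left_le_one_le) (use d b0 in auto)
          hence "(1 - d) * b \<le> 1/256" using b1 by linarith
          hence "(1 - d) * b * n \<le> 1/256 * n" by (rule mult_right_mono) simp
          moreover have "real n * (2/3) \<le> real n * ln 2" by (rule mult_left_mono[OF l2]) simp
          moreover have "real n \<ge> 4" using n4 by simp
          ultimately show ?thesis using ln3_le2 by linarith
        qed
        hence "3 \<le> exp (n * ln 2 - (1 - d) * b * n)" by (rule exp_ge3)
        hence "3 * exp ((1 - d) * b * n) \<le> exp (n * ln 2 - (1 - d) * b * n) * exp ((1 - d) * b * n)"
          by (rule mult_right_mono) simp
        also have "\<dots> = exp (n * ln 2 - (1 - d) * b * n + (1 - d) * b * n)" by (rule exp_add[symmetric])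
        also have "\<dots> = exp (n * ln 2)" by simp
        also have "\<dots> = exp (ln 2) ^ n" by (rule exp_of_nat_mult)
        also have "\<dots> = 2 ^ n" by simp
        finally show ?thesis .
      qed
      define f where "f m = min (real (n choose m) / 2 ^ n) (Z m)" for m
      define B where "B = {m. real m < (1/2 - e) * real n}"
      define m0 where "m0 = nat \<lceil>(1/2 - e) * real n\<rceil>"
      have split: "(\<Sum>m\<le>n. f m) = (\<Sum>m\<in>{..<n} \<inter> B. f m) + (\<Sum>m\<in>{..<n} - B. f m) + f n"
      proof -
        have "(\<Sum>m\<le>n. f m) = (\<Sum>m<Suc n. f m)" by (simp only: lessThan_Suc_atMost)
        also have "\<dots> = (\<Sum>m<n. f m) + f n" by simp
        also have "(\<Sum>m<n. f m) = (\<Sum>m\<in>{..<n} \<inter> B. f m) + (\<Sum>m\<in>{..<n} - B. f m)"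
          by (rule sum.Int_Diff) simp
        finally show ?thesis .
      qed
      have S1: "(\<Sum>m\<in>{..<n} \<inter> B. f m) \<le> exp (-2 * real n * e\<^sup>2)"
      proof -
        have "(\<Sum>m\<in>{..<n} \<inter> B. f m) \<le> (\<Sum>m\<in>{..<n} \<inter> B. real (n choose m) / 2 ^ n)"
          by (rule sum_mono) (simp add: f_def)
        also have "\<dots> \<le> (\<Sum>m\<in>{m. m \<le> n \<and> real m < (1/2 - e) * n}. real (n choose m) / 2 ^ n)"
          by (rule sum_mono2) (auto simp: B_def intro!: finite_subset[of _ "{..n}"])
        also have "\<dots> \<le> exp (-2 * real n * e\<^sup>2)"
          by (rule binom_tail) (use npos d in \<open>auto simp: e_def\<close>)
        finally show ?thesis .
      qed
      have S2: "(\<Sum>m\<in>{..<n} - B. f m) \<le> K * (th ^ m0 / (1 - th))"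
      proof -
        have "(\<Sum>m\<in>{..<n} - B. f m) \<le> (\<Sum>m\<in>{..<n} - B. K * th ^ m)"
        proof (rule sum_mono)
          fix m assume "m \<in> {..<n} - B"
          hence "m < n" by simp
          hence "Z m \<le> K * E m" by (rule less.IH)
          thus "f m \<le> K * th ^ m" by (simp add: f_def Eth min.coboundedI2)
        qed
        also have "\<dots> \<le> (\<Sum>m\<in>{m0..<n}. K * th ^ m)"
        proof (rule sum_mono2)
          show "{..<n} - B \<subseteq> {m0..<n}"
          proof
            fix m assume m: "m \<in> {..<n} - B"
            hence "(1/2 - e) * real n \<le> real m" by (simp add: B_def)
            hence "m0 \<le> m" unfolding m0_def by (simp add: nat_ceiling_le_eq)
            thus "m \<in> {m0..<n}" using m by simp
          qed
        qed (use th01 K1 in auto)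
        also have "\<dots> = K * (\<Sum>m\<in>{m0..<n}. th ^ m)" by (simp add: sum_distrib_left)
        also have "\<dots> \<le> K * (th ^ m0 / (1 - th))"
          using K1 geom_tail[of th m0 n] th01 by (intro mult_left_mono) auto
        finally show ?thesis .
      qed
      have S3: "f n \<le> 1 / 2 ^ n" by (simp add: f_def min.coboundedI1)
      have thm0: "th ^ m0 \<le> exp (-(2-d) * b * ((1/2 - e) * real n))"
      proof -
        have "(1/2 - e) * real n \<le> real m0" unfolding m0_def by (rule real_nat_ceiling_ge)
        hence "(2 - d) * b * ((1/2 - e) * real n) \<le> (2 - d) * b * real m0"
          using db by (intro mult_left_mono) auto
        hence "E m0 \<le> exp (-(2-d) * b * ((1/2 - e) * real n))"
          unfolding E_def negmul by simp
        thus ?thesis by (simp add: Eth)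
      qed
      have X1: "exp (- b * n) * exp (-2 * real n * e\<^sup>2) \<le> E n / 3"
      proof -
        have "exp (- b * n) * exp (-2 * real n * e\<^sup>2) = exp (-3 * b * n)"
          by (simp add: exp_add[symmetric] e2 algebra_simps)
        moreover have "3 * exp (-3 * b * n) \<le> exp ((1 + d) * b * n) * exp (-3 * b * n)"
        proof (rule mult_right_mono)
          have "b * n \<le> (1 + d) * b * n" using d b0 by (simp add: algebra_simps)
          thus "3 \<le> exp ((1 + d) * b * n)" using F1 by (meson exp_le_cancel_iff order_trans)
        qed simp
        moreover have "exp ((1 + d) * b * n) * exp (-3 * b * n) = E n"
          unfolding E_def by (simp add: exp_add[symmetric] algebra_simps)
        ultimately show ?thesis by linarith
      qed
      have X2: "exp (- b * n) * (K * (th ^ m0 / (1 - th))) \<le> K * E n / 3"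
      proof -
        have P: "exp (- b * n) * exp (-(2-d) * b * ((1/2 - e) * real n)) * exp (b * d * n / 4) \<le> E n"
        proof -
          have "exp (- b * n) * exp (-(2-d) * b * ((1/2 - e) * real n)) * exp (b * d * n / 4)
                = exp (- b * n + (-(2-d) * b * ((1/2 - e) * real n)) + b * d * n / 4)"
            by (simp only: exp_add)
          also have "- b * n + (-(2-d) * b * ((1/2 - e) * real n)) + b * d * n / 4
                     = -(2-d) * b * n - b * n * (d\<^sup>2 / 8)"
            by (simp add: e_def field_simps power2_eq_square)
          also have "exp (-(2-d) * b * n - b * n * (d\<^sup>2 / 8)) \<le> E n"
            unfolding E_def using b0 by simp
          finally show ?thesis .
        qed
        have "exp (- b * n) * (K * (th ^ m0 / (1 - th))) \<le>
              exp (- b * n) * (K * (exp (-(2-d) * b * ((1/2 - e) * real n)) / (1 - th)))"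
          using thm0 th01 K1 by (intro mult_left_mono divide_right_mono) auto
        also have "\<dots> = K / 3 * (exp (- b * n) * exp (-(2-d) * b * ((1/2 - e) * real n)) * (3 / (1 - th)))"
          by (simp add: field_simps)
        also have "\<dots> \<le> K / 3 * (exp (- b * n) * exp (-(2-d) * b * ((1/2 - e) * real n)) * exp (b * d * n / 4))"
          using F2 K1 by (intro mult_left_mono) auto
        also have "\<dots> \<le> K / 3 * E n"
          using P K1 by (intro mult_left_mono) auto
        finally show ?thesis by simp
      qed
      have X3: "exp (- b * n) * (1 / 2 ^ n) \<le> E n / 3"
      proof -
        have "E n * exp ((1 - d) * b * n) = exp (-(2-d) * b * real n + (1 - d) * b * n)"
          unfolding E_def by (simp only: exp_add)
        also have "-(2-d) * b * real n + (1 - d) * b * n = - b * n" by (simp add: algebra_simps)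
        finally have e1: "E n * exp ((1 - d) * b * n) = exp (- b * n)" .
        have "3 * exp (- b * n) = E n * (3 * exp ((1 - d) * b * n))" using e1 by simp
        also have "\<dots> \<le> E n * 2 ^ n" using F3 Epos[of n] by (intro mult_left_mono) auto
        finally have "3 * exp (- b * n) \<le> E n * 2 ^ n" .
        thus ?thesis by (simp add: field_simps)
      qed
      have "Z n \<le> exp (- b * n) * (\<Sum>m\<le>n. f m)" using rec[of n] by (simp add: f_def b_def)
      also have "\<dots> = exp (- b * n) * ((\<Sum>m\<in>{..<n} \<inter> B. f m) + (\<Sum>m\<in>{..<n} - B. f m) + f n)"
        by (simp only: split)
      also have "\<dots> \<le> exp (- b * n) * (exp (-2 * real n * e\<^sup>2) + K * (th ^ m0 / (1 - th)) + 1 / 2 ^ n)"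
        using S1 S2 S3 by (intro mult_left_mono add_mono) auto
      also have "\<dots> = exp (- b * n) * exp (-2 * real n * e\<^sup>2) + exp (- b * n) * (K * (th ^ m0 / (1 - th)))
                        + exp (- b * n) * (1 / 2 ^ n)" by (simp add: distrib_left)
      also have "\<dots> \<le> E n / 3 + K * E n / 3 + E n / 3" using X1 X2 X3 by linarith
      also have "\<dots> \<le> K * E n" using K1 Epos[of n] by (simp add: field_simps)
      finally show ?thesis .
    qed
  qed
  show ?thesis using main unfolding E_def b_def by blast
qed

lemma jensen_exp:
  fixes a :: "'a \<Rightarrow> real" and b :: real
  assumes fin: "finite A" and ne: "A \<noteq> {}"
  shows "exp (- b * ((\<Sum>x\<in>A. a x) / card A)) \<le> (\<Sum>x\<in>A. exp (- b * a x)) / card A"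
proof -
  define mu where "mu = (\<Sum>x\<in>A. a x) / card A"
  have cpos: "real (card A) > 0" using fin ne by (simp add: card_gt_0_iff)
  have "(\<Sum>x\<in>A. exp (- b * mu) * (1 + (- b * (a x - mu)))) \<le> (\<Sum>x\<in>A. exp (- b * a x))"
  proof (rule sum_mono)
    fix x assume "x \<in> A"
    have "exp (- b * mu) * (1 + (- b * (a x - mu))) \<le> exp (- b * mu) * exp (- b * (a x - mu))"
      by (intro mult_left_mono exp_ge_add_one_self) auto
    also have "\<dots> = exp (- b * a x)" by (simp add: exp_add[symmetric] algebra_simps)
    finally show "exp (- b * mu) * (1 + (- b * (a x - mu))) \<le> exp (- b * a x)" .
  qed
  moreover have "(\<Sum>x\<in>A. exp (- b * mu) * (1 + (- b * (a x - mu)))) = exp (- b * mu) * card A"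
  proof -
    have "(\<Sum>x\<in>A. exp (- b * mu) * (1 + (- b * (a x - mu)))) =
          exp (- b * mu) * (real (card A) - b * ((\<Sum>x\<in>A. a x) - card A * mu))"
      by (simp add: sum_distrib_left sum_subtractf algebra_simps sum.distrib)
    also have "(\<Sum>x\<in>A. a x) - card A * mu = 0" using cpos by (simp add: mu_def)
    finally show ?thesis by simp
  qed
  ultimately have "exp (- b * mu) * card A \<le> (\<Sum>x\<in>A. exp (- b * a x))" by simp
  thus ?thesis using cpos by (simp add: mu_def field_simps)
qed

definition avg :: "nat \<Rightarrow> real" where
  "avg n = (\<Sum>c\<in>V n. real (tauP (Pp n c))) / 2 ^ n"

lemma V_ne: "V n \<noteq> {}"
  using card_V[of n] by auto

lemma avg_lower:
  assumes d: "0 < d" "d \<le> 1/2"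
  shows "\<exists>C. \<forall>n. avg n \<ge> (2 - d) * n - C"
proof -
  define b where "b = (d/8)\<^sup>2"
  have b0: "b > 0" using d by (simp add: b_def)
  have "\<exists>K. \<forall>n. Zs b n \<le> K * exp (-(2-d) * (d/8)\<^sup>2 * n)"
  proof (rule analysis[OF d])
    show "\<And>n. 0 \<le> Zs b n" by (rule Zs_nonneg)
    show "\<And>n. Zs b n \<le> 1" using b0 by (simp add: Zs_le1)
    show "\<And>n. Zs b n \<le> exp (- ((d/8)\<^sup>2) * n) * (\<Sum>m\<le>n. min (real (n choose m) / 2 ^ n) (Zs b m))"
      using GF_step[of b] b0 unfolding b_def by simp
  qed
  then obtain K where K: "\<And>n. Zs b n \<le> K * exp (-(2-d) * b * n)" unfolding b_def by blast
  have Kpos: "K > 0"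
  proof -
    have "Zs b 0 > 0" by (simp add: Zs_def V_def)
    thus ?thesis using K[of 0] by simp
  qed
  have "avg n \<ge> (2 - d) * n - ln K / b" for n
  proof -
    have "exp (- b * avg n) \<le> Zs b n"
      using jensen_exp[OF finite_V V_ne, where a="\<lambda>c. real (tauP (Pp n c))" and b=b]
      by (simp add: avg_def Zs_def card_V)
    also have "\<dots> \<le> K * exp (-(2-d) * b * n)" by (rule K)
    also have "\<dots> = exp (ln K + (-(2-d) * b * n))" using Kpos by (simp add: exp_add)
    finally have "- b * avg n \<le> ln K + (-(2-d) * b * n)" by simp
    hence h: "(2 - d) * n * b - ln K \<le> avg n * b" by (simp add: algebra_simps)
    have "((2 - d) * n * b - ln K) / b \<le> avg n" using h b0 by (simp add: pos_divide_le_eq)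
    moreover have "((2 - d) * n * b - ln K) / b = (2 - d) * n - ln K / b" using b0 by (simp add: field_simps)
    ultimately show ?thesis by simp
  qed
  thus ?thesis by blast
qed

lemma avg_eps:
  assumes e: "(eps::real) > 0"
  shows "\<exists>n0. \<forall>n\<ge>n0. 2 * (1 - eps) * n \<le> avg n"
proof -
  define d where "d = min eps (1/2)"
  have d: "0 < d" "d \<le> 1/2" "d \<le> eps" using e by (auto simp: d_def)
  obtain C where C: "\<And>n. avg n \<ge> (2 - d) * n - C" using avg_lower[OF d(1,2)] by blast
  define n0 where "n0 = nat \<lceil>C / eps\<rceil>"
  have "2 * (1 - eps) * n \<le> avg n" if "n \<ge> n0" for n
  proof -
    have "C / eps \<le> real n" using that unfolding n0_def by linarith
    hence "C \<le> eps * n" using e by (simp add: field_simps)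
    moreover have "d * n \<le> eps * n" using d by (simp add: mult_right_mono)
    ultimately have "2 * (1 - eps) * n \<le> (2 - d) * n - C" by (simp add: algebra_simps)
    thus ?thesis using C[of n] by linarith
  qed
  thus ?thesis by blast
qed

abbreviation PM :: "(nat \<Rightarrow> bit) measure" where
  "PM \<equiv> PiM (UNIV :: nat set) (\<lambda>_. coin)"

definition Cyl :: "nat \<Rightarrow> (nat \<Rightarrow> bit) \<Rightarrow> (nat \<Rightarrow> bit) set" where
  "Cyl n v = prod_emb UNIV (\<lambda>_. coin) {..<n} (PiE {..<n} (\<lambda>i. {v i}))"

lemma space_coin[simp]: "space coin = UNIV" by (simp add: coin_def)
lemma sets_coin[simp]: "sets coin = UNIV" by (simp add: coin_def)

lemma mem_Cyl: "c \<in> Cyl n v \<longleftrightarrow> (\<forall>i<n. c i = v i)"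
  by (auto simp: Cyl_def prod_emb_def PiE_iff)

lemma Cyl_sets: "Cyl n v \<in> sets PM"
  unfolding Cyl_def by (rule sets_PiM_I) auto

lemma pps: "product_prob_space (\<lambda>_::nat. coin)"
  unfolding product_prob_space_def product_prob_space_axioms_def product_sigma_finite_def
  by (simp add: coin_def prob_space_measure_pmf prob_space_imp_sigma_finite)

lemma emeasure_coin: "emeasure coin {b} = ennreal (1/2)"
  unfolding coin_def by (subst emeasure_pmf_of_set) (auto simp: card_UNIV_bit)

lemma emeasure_Cyl: "emeasure PM (Cyl n v) = ennreal ((1/2) ^ n)"
proof -
  have "emeasure PM (Cyl n v) = (\<Prod>i\<in>{..<n}. emeasure coin {v i})"
    unfolding Cyl_def by (rule product_prob_space.emeasure_PiM_emb[OF pps]) auto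
  also have "\<dots> = (\<Prod>i\<in>{..<n}. ennreal (1/2))" by (simp add: emeasure_coin)
  also have "\<dots> = ennreal (1/2) ^ n" by simp
  also have "\<dots> = ennreal ((1/2) ^ n)" by (rule ennreal_power) simp
  finally show ?thesis .
qed

lemma tau_r_of: "tau (r_of n c) = tauP (Pp n c)"
  by (simp add: tau_tauP Pp_def)

lemma tau_decomp:
  "ennreal (real (tau (r_of n c))) =
     (\<Sum>v\<in>V n. ennreal (real (tauP (Pp n v))) * indicator (Cyl n v) c)"
proof -
  define v0 where "v0 = restrict c {..<n}"
  have v0V: "v0 \<in> V n" by (simp add: v0_def V_def)
  have cv0: "c \<in> Cyl n v0" by (simp add: mem_Cyl v0_def)
  have uniq: "c \<in> Cyl n v \<longleftrightarrow> v = v0" if "v \<in> V n" for v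
  proof
    assume "c \<in> Cyl n v"
    hence "\<forall>i<n. c i = v i" by (simp add: mem_Cyl)
    thus "v = v0" using V_ext[OF that v0V] by (simp add: v0_def)
  next
    assume "v = v0" thus "c \<in> Cyl n v" using cv0 by simp
  qed
  have "(\<Sum>v\<in>V n. ennreal (real (tauP (Pp n v))) * indicator (Cyl n v) c) =
        (\<Sum>v\<in>V n. if v = v0 then ennreal (real (tauP (Pp n v0))) else 0)"
    by (rule sum.cong[OF refl]) (auto simp: uniq indicator_def)
  also have "\<dots> = ennreal (real (tauP (Pp n v0)))" using v0V by (simp add: sum.delta)
  also have "Pp n v0 = Pp n c" by (rule Pp_cong) (simp add: v0_def)
  finally show ?thesis by (simp add: tau_r_of)
qed

lemma integral_mu:
  "(\<integral>\<^sup>+ r. ennreal (real (tau r)) \<partial>mu n) = ennreal (avg n)"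
proof -
  have meas: "(\<lambda>c. ennreal (real (tau (r_of n c)))) \<in> borel_measurable PM"
    unfolding tau_decomp
    by (intro borel_measurable_sum borel_measurable_times_ennreal borel_measurable_const
              borel_measurable_indicator Cyl_sets)
  have "(\<integral>\<^sup>+ r. ennreal (real (tau r)) \<partial>mu n) = (\<integral>\<^sup>+ c. ennreal (real (tau (r_of n c))) \<partial>PM)"
    unfolding mu_def
    by (rule nn_integral_embed_measure[OF inj_r_of]) (rule measurable_embed_measure1[where g="\<lambda>r. ennreal (real (tau r))" and f="r_of n", OF meas])
  also have "\<dots> = (\<integral>\<^sup>+ c. (\<Sum>v\<in>V n. ennreal (real (tauP (Pp n v))) * indicator (Cyl n v) c) \<partial>PM)"
    by (simp only: tau_decomp)
  also have "\<dots> = (\<Sum>v\<in>V n. \<integral>\<^sup>+ c. ennreal (real (tauP (Pp n v))) * indicator (Cyl n v) c \<partial>PM)"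
    by (rule nn_integral_sum) (intro borel_measurable_times_ennreal borel_measurable_const
              borel_measurable_indicator Cyl_sets)
  also have "\<dots> = (\<Sum>v\<in>V n. ennreal (real (tauP (Pp n v))) * emeasure PM (Cyl n v))"
    by (rule sum.cong[OF refl]) (rule nn_integral_cmult_indicator[OF Cyl_sets])
  also have "\<dots> = (\<Sum>v\<in>V n. ennreal (real (tauP (Pp n v)) * (1/2) ^ n))"
    by (rule sum.cong[OF refl]) (simp add: emeasure_Cyl ennreal_mult)
  also have "\<dots> = ennreal (\<Sum>v\<in>V n. real (tauP (Pp n v)) * (1/2) ^ n)"
    by (rule sum_ennreal) simp
  also have "(\<Sum>v\<in>V n. real (tauP (Pp n v)) * (1/2) ^ n) = avg n"
  proof -
    have "(\<Sum>v\<in>V n. real (tauP (Pp n v)) * (1/2) ^ n) = (\<Sum>v\<in>V n. real (tauP (Pp n v))) * (1/2) ^ n"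
      by (rule sum_distrib_right[symmetric])
    also have "\<dots> = avg n" unfolding avg_def by (simp only: power_one_over divide_inverse mult_1 power_inverse)
    finally show ?thesis .
  qed
  finally show ?thesis .
qed

theorem proposition2p13:
  fixes \<epsilon> :: real
  assumes "\<epsilon> > 0"
  shows "\<exists>n0::nat. \<forall>n\<ge>n0.
           ennreal (2 * (1 - \<epsilon>) * real n) \<le> (\<integral>\<^sup>+ r. ennreal (real (tau r)) \<partial>mu n)"
proof -
  obtain n0 where n0: "\<And>n. n \<ge> n0 \<Longrightarrow> 2 * (1 - \<epsilon>) * n \<le> avg n"
    using avg_eps[OF assms] by blast
  show ?thesis
  proof (intro exI allI impI)
    fix n assume "n \<ge> n0"
    thus "ennreal (2 * (1 - \<epsilon>) * real n) \<le> (\<integral>\<^sup>+ r. ennreal (real (tau r)) \<partial>mu n)"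
      unfolding integral_mu using n0 by (simp add: ennreal_leI)
  qed
qed

end
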